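(* Let $\sigma>0$ be fixed and $z\in\mathbb{C}$. (i) If $|\Re z|\ge\sigma$, then $|e^z-1|\ge1-e^{-\sigma}$. (ii) Let $R=|z|$ and $\mathcal{J}=\bigcup_{m\in\mathbb{Z}}(2\pi m-\pi/2,\,2\pi m+\pi/2)$. Then for $z$ with $|\Re z|<\sigma$, $$|e^z-1|\ge|\sin R|\,\mathbf{1}_{\{R\in\mathcal{J}\}}+\mathbf{1}_{\{R\in\mathcal{J}^c\}}+O(1/R)\qquad\text{as }R\to\infty,$$ i.e. there are constants $C,R_0>0$ such that for all $z$ with $|\Re z|<\sigma$ and $R=|z|\ge R_0$, $|e^z-1|\ge|\sin R|\,\mathbf{1}_{\{R\in\mathcal{J}\}}+\mathbf{1}_{\{R\in\mathcal{J}^c\}}-C/R$.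
   Context: $\mathbf{1}_S$ denotes the indicator function of a set $S$. *)

theory Defs
  imports Complex_Main "HOL-Library.Indicator_Function"
begin

definition setJ :: "real set" where
  "setJ = (\<Union>m::int. {2 * pi * of_int m - pi / 2 <..< 2 * pi * of_int m + pi / 2})"

end

theory Submission
  imports Defs
begin

lemma sin_lip: "\<bar>sin a - sin b\<bar> \<le> \<bar>a - b\<bar>" for a b :: real
proof -
  have "\<bar>sin a - sin b\<bar> = 2 * \<bar>sin ((a - b) / 2)\<bar> * \<bar>cos ((a + b) / 2)\<bar>"
    by (simp add: sin_diff_sin abs_mult)
  also have "\<dots> \<le> 2 * \<bar>(a - b) / 2\<bar> * 1"
    by (intro mult_mono abs_sin_x_le_abs_x) (auto simp: abs_cos_le_one)
  finally show ?thesis by simp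
qed

lemma cos_lip: "\<bar>cos a - cos b\<bar> \<le> \<bar>a - b\<bar>" for a b :: real
proof -
  have "\<bar>cos a - cos b\<bar> = 2 * \<bar>sin ((a + b) / 2)\<bar> * \<bar>sin ((b - a) / 2)\<bar>"
    by (simp add: cos_diff_cos abs_mult)
  also have "\<dots> \<le> 2 * 1 * \<bar>(b - a) / 2\<bar>"
    by (intro mult_mono abs_sin_x_le_abs_x) (auto simp: abs_sin_le_one)
  finally show ?thesis by simp
qed

lemma cos_pos_J: assumes "cos R > 0" shows "R \<in> setJ"
proof -
  define m where "m = round (R / (2*pi))"
  define t where "t = R - 2*pi*of_int m"
  have h: "\<bar>of_int m - R/(2*pi)\<bar> \<le> 1/2" unfolding m_def by (rule of_int_round_abs_le)
  have "\<bar>t\<bar> = 2*pi*\<bar>of_int m - R/(2*pi)\<bar>" unfolding t_def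
    by (simp add: abs_minus_commute field_simps abs_mult flip: abs_mult[of "2*pi"])
  moreover have "2*pi*\<bar>of_int m - R/(2*pi)\<bar> \<le> 2*pi*(1/2)"
    using h by (intro mult_left_mono) auto
  ultimately have tle: "\<bar>t\<bar> \<le> pi" by simp
  have "cos t = cos R" unfolding t_def
    by (simp add: cos_diff mult.assoc[symmetric])
  have "\<bar>t\<bar> < pi/2"
  proof (rule ccontr)
    assume "\<not> ?thesis"
    define s where "s = \<bar>t\<bar> - pi/2"
    have "0 \<le> s" "s \<le> pi" using \<open>\<not> _\<close> tle by (auto simp: s_def)
    have "cos \<bar>t\<bar> = - sin s" by (simp add: s_def cos_add) (simp add: s_def sin_diff)
    moreover have "sin s \<ge> 0" using \<open>0 \<le> s\<close> \<open>s \<le> pi\<close> by (simp add: sin_ge_zero)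
    ultimately show False using assms \<open>cos t = cos R\<close> cos_abs_real[of t] by linarith
  qed
  then have "- (pi/2) < t" "t < pi/2" by (simp_all add: abs_less_iff)
  then have "R \<in> {2 * pi * of_int m - pi / 2 <..< 2 * pi * of_int m + pi / 2}"
    unfolding t_def by simp
  then show ?thesis unfolding setJ_def by blast
qed

lemma norm_sq:
  fixes z :: complex
  shows "(cmod (exp z - 1))^2 = (exp (Re z) - cos (Im z))^2 + (sin (Im z))^2"
proof -
  have g: "(e * c - 1)^2 + (e * s)^2 = (e - c)^2 + s^2" if "s^2 = 1 - c^2" for e c s :: real
  proof -
    have "(e * c - 1)^2 + (e * s)^2 = e^2 * c^2 - 2*e*c + 1 + e^2 * s^2"
      by (simp add: power2_eq_square algebra_simps)
    also have "\<dots> = e^2 - 2*e*c + 1"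
    proof -
      have "e^2 * s^2 = e^2 - e^2 * c^2" using that by (simp add: right_diff_distrib)
      then show ?thesis by linarith
    qed
    also have "\<dots> = (e - c)^2 + s^2" using that by (simp add: power2_eq_square algebra_simps)
    finally show ?thesis .
  qed
  have "(cmod (exp z - 1))^2 = (exp (Re z) * cos (Im z) - 1)^2 + (exp (Re z) * sin (Im z))^2"
    by (simp add: cmod_def Re_exp Im_exp)
  also have "\<dots> = (exp (Re z) - cos (Im z))^2 + (sin (Im z))^2"
    by (rule g) (rule sin_squared_eq)
  finally show ?thesis .
qed

lemma lb_sin: "cmod (exp z - 1) \<ge> \<bar>sin (Im z)\<bar>"
proof -
  have "\<bar>sin (Im z)\<bar>^2 \<le> (cmod (exp z - 1))^2" using norm_sq[of z] by simp
  then show ?thesis by (rule power2_le_imp_le) simp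
qed

lemma lb_cos: "cmod (exp z - 1) \<ge> 1 - max (cos (Im z)) 0"
proof (cases "cos (Im z) \<le> 0")
  case True
  have "(exp (Re z) - cos (Im z))^2 \<ge> (cos (Im z))^2"
  proof -
    have "exp (Re z) - cos (Im z) \<ge> - cos (Im z)" "- cos (Im z) \<ge> 0"
      using True by (auto simp: less_imp_le)
    then have "(- cos (Im z))^2 \<le> (exp (Re z) - cos (Im z))^2"
      by (intro power_mono) auto
    then show ?thesis by simp
  qed
  then have "1 \<le> (cmod (exp z - 1))^2" using norm_sq[of z] sin_cos_squared_add[of "Im z"] by linarith
  then have "1 \<le> cmod (exp z - 1)" by (metis one_power2 power2_le_imp_le norm_ge_zero)
  then show ?thesis using True by simp
next
  case False
  let ?c = "cos (Im z)"
  have c1: "?c \<le> 1" by simp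
  have "(1 - ?c)^2 \<le> (sin (Im z))^2"
  proof -
    have "(sin (Im z))^2 = (1 - ?c) * (1 + ?c)" using sin_cos_squared_add[of "Im z"]
      by (simp add: power2_eq_square algebra_simps)
    moreover have "(1 - ?c) * (1 - ?c) \<le> (1 - ?c) * (1 + ?c)"
      using False c1 by (intro mult_left_mono) auto
    ultimately show ?thesis by (simp add: power2_eq_square)
  qed
  then have "(1 - ?c)^2 \<le> \<bar>sin (Im z)\<bar>^2" by simp
  then have "1 - ?c \<le> \<bar>sin (Im z)\<bar>" by (rule power2_le_imp_le) simp
  moreover have "max ?c 0 = ?c" using False by simp
  ultimately show ?thesis using lb_sin[of z] by linarith
qed

theorem lemmaA1:
  fixes \<sigma> :: real
  assumes "\<sigma> > 0"
  shows "(\<forall>z::complex. \<bar>Re z\<bar> \<ge> \<sigma> \<longrightarrow> cmod (exp z - 1) \<ge> 1 - exp (- \<sigma>))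
       \<and> (\<exists>C R0. C > 0 \<and> R0 > 0 \<and>
            (\<forall>z::complex. \<bar>Re z\<bar> < \<sigma> \<and> cmod z \<ge> R0 \<longrightarrow>
               cmod (exp z - 1) \<ge> \<bar>sin (cmod z)\<bar> * indicator setJ (cmod z)
                                   + indicator (- setJ) (cmod z) - C / cmod z))"
proof (intro conjI allI impI)
  fix z :: complex
  assume h: "\<bar>Re z\<bar> \<ge> \<sigma>"
  have t: "\<bar>exp (Re z) - 1\<bar> \<le> cmod (exp z - 1)"
    using norm_triangle_ineq3[of "exp z" 1] by (simp add: norm_exp_eq_Re)
  have a: "1 - exp (- \<sigma>) \<le> \<sigma>" using exp_ge_add_one_self[of "-\<sigma>"] by simp
  have b: "\<sigma> \<le> exp \<sigma> - 1" using exp_ge_add_one_self[of "\<sigma>"] by linarith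
  show "cmod (exp z - 1) \<ge> 1 - exp (- \<sigma>)"
  proof (cases "Re z \<ge> 0")
    case True
    then have "exp \<sigma> \<le> exp (Re z)" using h by simp
    then show ?thesis using t a b by linarith
  next
    case False
    then have "exp (Re z) \<le> exp (-\<sigma>)" using h by simp
    then show ?thesis using t by linarith
  qed
next
  show "\<exists>C R0. C > 0 \<and> R0 > 0 \<and>
            (\<forall>z::complex. \<bar>Re z\<bar> < \<sigma> \<and> cmod z \<ge> R0 \<longrightarrow>
               cmod (exp z - 1) \<ge> \<bar>sin (cmod z)\<bar> * indicator setJ (cmod z)
                                   + indicator (- setJ) (cmod z) - C / cmod z)"
  proof (intro exI conjI allI impI)
    show "(\<sigma>^2 + 1 :: real) > 0" using zero_le_power2[of \<sigma>] by linarith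
    show "(1::real) > 0" by simp
    fix z :: complex
    assume hz: "\<bar>Re z\<bar> < \<sigma> \<and> 1 \<le> cmod z"
    define R where "R = cmod z"
    define y0 where "y0 = \<bar>Im z\<bar>"
    define d where "d = R - y0"
    have R1: "R \<ge> 1" using hz R_def by simp
    have y0R: "y0 \<le> R" unfolding y0_def R_def by (rule abs_Im_le_cmod)
    have y00: "y0 \<ge> 0" unfolding y0_def by simp
    have "R^2 = (Re z)^2 + y0^2" unfolding R_def y0_def by (simp add: cmod_power2)
    then have "d * (R + y0) = (Re z)^2" unfolding d_def by (simp add: power2_eq_square algebra_simps)
    moreover have "(Re z)^2 \<le> \<sigma>^2"
    proof -
      have "\<bar>Re z\<bar>^2 \<le> \<sigma>^2" using hz by (intro power_mono) auto
      then show ?thesis by simp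
    qed
    moreover have "d \<ge> 0" using y0R d_def by simp
    moreover have "d * R \<le> d * (R + y0)" using y00 \<open>d \<ge> 0\<close> by (intro mult_left_mono) auto
    ultimately have "d * R \<le> \<sigma>^2" by linarith
    then have dle: "d \<le> \<sigma>^2 / R" using R1 by (simp add: field_simps)
    have "\<sigma>^2 / R \<le> (\<sigma>^2 + 1) / R" using R1 by (simp add: divide_right_mono)
    with dle have dC: "d \<le> (\<sigma>^2 + 1) / R" by linarith
    have sy: "\<bar>sin y0\<bar> = \<bar>sin (Im z)\<bar>" unfolding y0_def by (cases "Im z \<ge> 0") auto
    have cy: "cos y0 = cos (Im z)" unfolding y0_def by (rule cos_abs_real)
    show "cmod (exp z - 1) \<ge> \<bar>sin (cmod z)\<bar> * indicator setJ (cmod z)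
                                   + indicator (- setJ) (cmod z) - (\<sigma>^2 + 1) / cmod z"
    proof (cases "R \<in> setJ")
      case True
      have "\<bar>sin R\<bar> \<le> \<bar>sin y0\<bar> + d" using sin_lip[of R y0] d_def y0R by linarith
      then show ?thesis using True lb_sin[of z] sy dC unfolding R_def[symmetric] by simp
    next
      case False
      then have "\<not> cos R > 0" using cos_pos_J by blast
      moreover have "cos y0 \<le> cos R + d" using cos_lip[of y0 R] d_def y0R by linarith
      ultimately have "max (cos (Im z)) 0 \<le> d" using cy d_def y0R by simp
      then have "1 - d \<le> cmod (exp z - 1)" using lb_cos[of z] by linarith
      then have "1 - (\<sigma>^2 + 1) / R \<le> cmod (exp z - 1)" using dC by linarith
      then show ?thesis using False unfolding R_def[symmetric] by simp
    qed
  qed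
qed

end
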